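(* Let $\beta\in(\frac{1+\sqrt5}{2},2)$. If the quasi-greedy orbit of $1$ hits $\beta^{-1}(\beta-1)^{-1}$ for the first time (there is a minimal $k\ge1$ with $Q^k(1)=\beta^{-1}(\beta-1)^{-1}$ and $Q^i(1)\notin[\beta^{-1},\beta^{-1}(\beta-1)^{-1}]$ for $1\le i<k$), then $\widetilde U_\beta$ is a subshift of finite type.
   Context: $\widetilde U_\beta\subseteq\{0,1\}^{\mathbb{N}}$ is the set of sequences $(a_n)$ that are the unique $\beta$-expansion (sequence with $x=\sum a_n\beta^{-n}$) of the number they represent. The quasi-greedy expansion $(\eta_i)$ of $1$ equals the greedy $\beta$-expansion of $1$ (generated by $G(x)=\beta x\bmod1$ on $[0,1)$, $G(x)=\beta x-1$ on $[1,(\beta-1)^{-1}]$) if that is infinite; if the greedy expansion is $a_1\cdots a_n0^\infty$ with $a_n=1$, then $(\eta_i)=(a_1\cdots a_{n-1}(a_n-1))^\infty$. The quasi-greedy orbit of $1$ is $Q^i(1)=\sum_{j\ge1}\eta_{i+j}\beta^{-j}$, $i\ge1$. A subshift of finite type is a set of all sequences avoiding some finite set of forbidden words. *)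

theory Defs
  imports Complex_Main
begin

text \<open>Digit sequences are functions nat \<Rightarrow> nat, 0-indexed: position n holds the
 digit a_(n+1) of the paper.\<close>

definition binseq :: "(nat \<Rightarrow> nat) \<Rightarrow> bool" where
  "binseq a \<longleftrightarrow> (\<forall>n. a n \<in> {0, 1})"

definition is_expansion :: "real \<Rightarrow> (nat \<Rightarrow> nat) \<Rightarrow> real \<Rightarrow> bool" where
  "is_expansion \<beta> a x \<longleftrightarrow> binseq a \<and> ((\<lambda>n. real (a n) / \<beta> ^ (n + 1)) sums x)"

definition seqval :: "real \<Rightarrow> (nat \<Rightarrow> nat) \<Rightarrow> real" where
  "seqval \<beta> a = (\<Sum>n. real (a n) / \<beta> ^ (n + 1))"

definition Utilde :: "real \<Rightarrow> (nat \<Rightarrow> nat) set" where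
  "Utilde \<beta> = {a. binseq a \<and> (\<forall>b. is_expansion \<beta> b (seqval \<beta> a) \<longrightarrow> b = a)}"

definition Gmap :: "real \<Rightarrow> real \<Rightarrow> real" where
  "Gmap \<beta> x = (if x < 1 then frac (\<beta> * x) else \<beta> * x - 1)"

definition gdigit :: "real \<Rightarrow> real \<Rightarrow> nat" where
  "gdigit \<beta> x = (if x < 1 then nat \<lfloor>\<beta> * x\<rfloor> else 1)"

definition greedy1 :: "real \<Rightarrow> nat \<Rightarrow> nat" where
  "greedy1 \<beta> n = gdigit \<beta> ((Gmap \<beta> ^^ n) 1)"

definition quasi_greedy1 :: "real \<Rightarrow> nat \<Rightarrow> nat" where
  "quasi_greedy1 \<beta> =
     (if \<exists>n. \<forall>m\<ge>n. greedy1 \<beta> m = 0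
      then (let N = (LEAST n. \<forall>m\<ge>n. greedy1 \<beta> m = 0)
            in (\<lambda>i. if i mod N = N - 1 then 0 else greedy1 \<beta> (i mod N)))
      else greedy1 \<beta>)"

text \<open>Q^i(1) = sum_{j>=1} eta_{i+j} beta^{-j}.\<close>
definition Qorb :: "real \<Rightarrow> nat \<Rightarrow> real" where
  "Qorb \<beta> i = (\<Sum>j. real (quasi_greedy1 \<beta> (i + j)) / \<beta> ^ (j + 1))"

definition occurs_at :: "nat list \<Rightarrow> (nat \<Rightarrow> nat) \<Rightarrow> nat \<Rightarrow> bool" where
  "occurs_at w a n \<longleftrightarrow> map a [n..<n + length w] = w"

definition is_SFT :: "(nat \<Rightarrow> nat) set \<Rightarrow> bool" where
  "is_SFT X \<longleftrightarrow> (\<exists>F :: nat list set. finite F \<and>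
      X = {a. binseq a \<and> (\<forall>w\<in>F. \<forall>n. \<not> occurs_at w a n)})"

end

theory Submission
  imports Defs
begin


definition tv :: "real \<Rightarrow> (nat \<Rightarrow> nat) \<Rightarrow> nat \<Rightarrow> real" where
  "tv \<beta> a n = seqval \<beta> (\<lambda>j. a (n + j))"

lemma binseq_le1: "binseq a \<Longrightarrow> a n \<le> 1"
  unfolding binseq_def by (metis insert_iff le_numeral_extra(4) less_one nat_less_le singletonD)

lemma binseq_shift: "binseq a \<Longrightarrow> binseq (\<lambda>j. a (n + j))"
  unfolding binseq_def by auto

lemma geom_sums: "1 < (\<beta>::real) \<Longrightarrow> (\<lambda>n. 1 / \<beta> ^ (n + 1)) sums (1 / (\<beta> - 1))"
proof -
  assume b: "1 < \<beta>"
  have "(\<lambda>n. (1/\<beta>) ^ n) sums (1 / (1 - 1/\<beta>))"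
    using geometric_sums[of "1/\<beta>"] b by simp
  then have "(\<lambda>n. (1/\<beta>) ^ n * (1/\<beta>)) sums (1 / (1 - 1/\<beta>) * (1/\<beta>))"
    by (rule sums_mult2)
  moreover have "1 / (1 - 1/\<beta>) * (1/\<beta>) = 1 / (\<beta> - 1)" using b by (simp add: field_simps)
  moreover have "\<And>n. (1/\<beta>) ^ n * (1/\<beta>) = 1 / \<beta> ^ (n + 1)" by (simp add: power_divide)
  ultimately show ?thesis by simp
qed

lemma summ: assumes "1 < \<beta>" "binseq a" shows "summable (\<lambda>n. real (a n) / \<beta> ^ (n + 1))"
proof (rule summable_comparison_test)
  show "summable (\<lambda>n. 1 / \<beta> ^ (n + 1))" using geom_sums[OF assms(1)] sums_summable by blast
  show "\<exists>N. \<forall>n\<ge>N. norm (real (a n) / \<beta> ^ (n + 1)) \<le> 1 / \<beta> ^ (n + 1)"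
    using binseq_le1[OF assms(2)] assms(1) by (auto intro!: divide_right_mono)
qed

lemma seqval_sums: "1 < \<beta> \<Longrightarrow> binseq a \<Longrightarrow> (\<lambda>n. real (a n) / \<beta> ^ (n + 1)) sums seqval \<beta> a"
  unfolding seqval_def using summ summable_sums by blast

lemma seqval_split:
  assumes "1 < \<beta>" "binseq a"
  shows "seqval \<beta> a = (real (a 0) + seqval \<beta> (\<lambda>j. a (Suc j))) / \<beta>"
proof -
  have s: "summable (\<lambda>n. real (a n) / \<beta> ^ (n + 1))" using summ assms by blast
  have "(\<Sum>n. real (a (Suc n)) / \<beta> ^ (Suc n + 1)) = seqval \<beta> a - real (a 0) / \<beta>"
    using suminf_split_head[OF s] unfolding seqval_def by simp
  moreover have "(\<Sum>n. real (a (Suc n)) / \<beta> ^ (Suc n + 1)) = seqval \<beta> (\<lambda>j. a (Suc j)) / \<beta>"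
  proof -
    have "(\<lambda>n. real (a (Suc n)) / \<beta> ^ (Suc n + 1)) = (\<lambda>n. real (a (Suc n)) / \<beta> ^ (n + 1) / \<beta>)"
      by (simp add: field_simps)
    moreover have "summable (\<lambda>n. real (a (Suc n)) / \<beta> ^ (n + 1))"
      using summ[OF assms(1) binseq_shift[OF assms(2), of 1]] by simp
    ultimately show ?thesis unfolding seqval_def using suminf_divide[of "\<lambda>n. real (a (Suc n)) / \<beta> ^ (n + 1)" \<beta>]
      by simp
  qed
  ultimately show ?thesis using assms(1) by (simp add: field_simps)
qed

lemma tv_step: "1 < \<beta> \<Longrightarrow> binseq a \<Longrightarrow> tv \<beta> a n = (real (a n) + tv \<beta> a (Suc n)) / \<beta>"
  unfolding tv_def using seqval_split[OF _ binseq_shift, of \<beta> a n] by simp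

lemma tv_prefix: "1 < \<beta> \<Longrightarrow> binseq a \<Longrightarrow>
   tv \<beta> a n = (\<Sum>i<j. real (a (n + i)) / \<beta> ^ (i + 1)) + tv \<beta> a (n + j) / \<beta> ^ j"
proof (induction j)
  case 0 then show ?case by simp
next
  case (Suc j)
  have "tv \<beta> a (n + j) = (real (a (n+j)) + tv \<beta> a (Suc (n + j))) / \<beta>" by (rule tv_step[OF Suc.prems])
  then show ?case using Suc by (simp add: field_simps)
qed

lemma tv0: "tv \<beta> a 0 = seqval \<beta> a" unfolding tv_def by simp

lemma seqval_bounds: assumes "1 < \<beta>" "binseq a"
  shows "0 \<le> seqval \<beta> a" "seqval \<beta> a \<le> 1 / (\<beta> - 1)"
proof -
  show "0 \<le> seqval \<beta> a" unfolding seqval_def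
    using summ[OF assms] assms(1) by (intro suminf_nonneg) auto
  have "(\<Sum>n. real (a n) / \<beta> ^ (n + 1)) \<le> (\<Sum>n. 1 / \<beta> ^ (n + 1))"
  proof (rule suminf_le)
    show "summable (\<lambda>n. real (a n) / \<beta> ^ (n + 1))" using summ[OF assms] .
    show "summable (\<lambda>n. 1 / \<beta> ^ (n + 1))" using geom_sums[OF assms(1)] sums_summable by blast
    fix n show "real (a n) / \<beta> ^ (n + 1) \<le> 1 / \<beta> ^ (n + 1)"
      using binseq_le1[OF assms(2), of n] assms(1) by (intro divide_right_mono) auto
  qed
  then show "seqval \<beta> a \<le> 1 / (\<beta> - 1)" unfolding seqval_def
    using sums_unique[OF geom_sums[OF assms(1)]] by simp
qed

lemma tv_bounds: "1 < \<beta> \<Longrightarrow> binseq a \<Longrightarrow> 0 \<le> tv \<beta> a n \<and> tv \<beta> a n \<le> 1 / (\<beta> - 1)"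
  unfolding tv_def using seqval_bounds binseq_shift by blast

definition cmp :: "(nat \<Rightarrow> nat) \<Rightarrow> nat \<Rightarrow> nat" where "cmp a = (\<lambda>i. 1 - a i)"

lemma binseq_cmp: "binseq a \<Longrightarrow> binseq (cmp a)"
  unfolding binseq_def cmp_def by auto

lemma seqval_cmp: assumes "1 < \<beta>" "binseq a"
  shows "seqval \<beta> (cmp a) = 1 / (\<beta> - 1) - seqval \<beta> a"
proof -
  have "(\<lambda>n. 1 / \<beta> ^ (n + 1) - real (a n) / \<beta> ^ (n + 1)) sums (1 / (\<beta> - 1) - seqval \<beta> a)"
    by (intro sums_diff geom_sums seqval_sums assms)
  moreover have "\<And>n. 1 / \<beta> ^ (n + 1) - real (a n) / \<beta> ^ (n + 1) = real (cmp a n) / \<beta> ^ (n + 1)"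
    using binseq_le1[OF assms(2)] by (simp add: cmp_def of_nat_diff diff_divide_distrib)
  ultimately show ?thesis unfolding seqval_def by (simp add: sums_iff)
qed

lemma tv_cmp: "1 < \<beta> \<Longrightarrow> binseq a \<Longrightarrow> tv \<beta> (cmp a) n = 1 / (\<beta> - 1) - tv \<beta> a n"
  unfolding tv_def using seqval_cmp[OF _ binseq_shift, of \<beta> a n] by (simp add: cmp_def)

lemma tv_M: assumes "1 < \<beta>" "binseq a" "tv \<beta> a n = 1 / (\<beta> - 1)" shows "a (n + j) = 1"
proof -
  have "tv \<beta> (cmp a) n = 0" using tv_cmp assms by simp
  then have z: "(\<Sum>i. real (cmp a (n + i)) / \<beta> ^ (i + 1)) = 0" unfolding tv_def seqval_def cmp_def by simp
  have "\<forall>i. real (cmp a (n + i)) / \<beta> ^ (i + 1) = 0"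
    using z summ[OF assms(1) binseq_shift[OF binseq_cmp[OF assms(2)], of n]] assms(1)
    by (subst (asm) suminf_eq_zero_iff) auto
  then have "cmp a (n + j) = 0" using assms(1) by (metis divide_eq_0_iff of_nat_eq_0_iff power_not_zero not_one_less_zero zero_neq_one)
  then show ?thesis using binseq_le1[OF assms(2), of "n+j"] unfolding cmp_def by (metis binseq_def assms(2) insertE diff_zero singletonD zero_neq_one)
qed



lemma lim_bdd: assumes "1 < (\<beta>::real)" "\<And>n. \<bar>y n\<bar> \<le> B" shows "(\<lambda>n. y n / \<beta> ^ n) \<longlonglongrightarrow> 0"
proof (rule tendsto_0_le[where K = B])
  show "(\<lambda>n. (1/\<beta>) ^ n) \<longlonglongrightarrow> 0" using assms by (intro LIMSEQ_power_zero) auto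
  show "\<forall>\<^sub>F n in sequentially. norm (y n / \<beta> ^ n) \<le> norm ((1/\<beta>) ^ n) * B"
  proof (rule always_eventually, rule allI)
    fix n
    have "norm (y n / \<beta> ^ n) = \<bar>y n\<bar> * (1/\<beta>) ^ n" using assms by (simp add: power_divide abs_divide)
    also have "\<dots> \<le> B * (1/\<beta>) ^ n" using assms by (intro mult_right_mono) auto
    finally show "norm (y n / \<beta> ^ n) \<le> norm ((1/\<beta>) ^ n) * B" using assms by (simp add: power_divide)
  qed
qed

definition gx :: "real \<Rightarrow> nat \<Rightarrow> real" where "gx \<beta> n = (Gmap \<beta> ^^ n) 1"

lemma gx_0: "gx \<beta> 0 = 1" by (simp add: gx_def)
lemma gx_Suc: "gx \<beta> (Suc n) = Gmap \<beta> (gx \<beta> n)" by (simp add: gx_def)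
lemma greedy1_gx: "greedy1 \<beta> n = gdigit \<beta> (gx \<beta> n)" by (simp add: gx_def greedy1_def)

lemma gx_range: assumes "1 < \<beta>" "\<beta> < 2" shows "n \<ge> 1 \<Longrightarrow> 0 \<le> gx \<beta> n \<and> gx \<beta> n < 1"
proof (induction n)
  case 0 then show ?case by simp
next
  case (Suc n)
  show ?case
  proof (cases "n = 0")
    case True then show ?thesis using assms by (simp add: gx_Suc gx_0 Gmap_def)
  next
    case False
    then have "gx \<beta> n < 1" using Suc by simp
    then show ?thesis by (simp add: gx_Suc Gmap_def frac_lt_1)
  qed
qed

lemma gx_step: assumes "1 < \<beta>" "\<beta> < 2"
  shows "gx \<beta> (Suc n) = \<beta> * gx \<beta> n - real (greedy1 \<beta> n) \<and> greedy1 \<beta> n \<le> 1"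
proof (cases "n = 0")
  case True then show ?thesis by (simp add: gx_Suc gx_0 Gmap_def greedy1_gx gdigit_def)
next
  case False
  then have r: "0 \<le> gx \<beta> n" "gx \<beta> n < 1" using gx_range[OF assms, of n] by auto
  have q: "\<beta> * gx \<beta> n < \<beta>" using mult_strict_left_mono[of "gx \<beta> n" 1 \<beta>] r assms by simp
  have p1: "0 \<le> \<beta> * gx \<beta> n" using assms r by simp
  have p2: "\<beta> * gx \<beta> n < 2" using assms(2) q by linarith
  note p = p1 p2
  then have f0: "0 \<le> \<lfloor>\<beta> * gx \<beta> n\<rfloor>" "\<lfloor>\<beta> * gx \<beta> n\<rfloor> \<le> 1" by linarith+
  then show ?thesis using r
    by (simp add: gx_Suc Gmap_def greedy1_gx gdigit_def frac_def) linarith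
qed

lemma greedy_bin: "1 < \<beta> \<Longrightarrow> \<beta> < 2 \<Longrightarrow> binseq (greedy1 \<beta>)"
  unfolding binseq_def using gx_step by (metis insert_iff le_Suc_eq le_zero_eq One_nat_def)

lemma greedy_partial: assumes "1 < \<beta>" "\<beta> < 2"
  shows "(\<Sum>i<n. real (greedy1 \<beta> i) / \<beta> ^ (i + 1)) = 1 - gx \<beta> n / \<beta> ^ n"
proof (induction n)
  case 0 then show ?case by (simp add: gx_0)
next
  case (Suc n)
  have "gx \<beta> (Suc n) = \<beta> * gx \<beta> n - real (greedy1 \<beta> n)" using gx_step[OF assms] by blast
  then have "gx \<beta> (Suc n) / \<beta> ^ Suc n = gx \<beta> n / \<beta> ^ n - real (greedy1 \<beta> n) / \<beta> ^ (n + 1)"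
    using assms by (simp add: field_simps)
  then show ?case using Suc by simp
qed

lemma greedy_sum: assumes "1 < \<beta>" "\<beta> < 2" shows "seqval \<beta> (greedy1 \<beta>) = 1"
proof -
  have lim: "(\<lambda>n. gx \<beta> n / \<beta> ^ n) \<longlonglongrightarrow> 0"
  proof (rule lim_bdd[OF assms(1)])
    fix n show "\<bar>gx \<beta> n\<bar> \<le> 1"
      using gx_range[OF assms, of n] by (cases "n = 0") (auto simp: gx_0)
  qed
  have "(\<lambda>n. 1 - gx \<beta> n / \<beta> ^ n) \<longlonglongrightarrow> 1 - 0" by (intro tendsto_diff tendsto_const lim)
  then have "(\<lambda>n. real (greedy1 \<beta> n) / \<beta> ^ (n + 1)) sums 1"
    unfolding sums_def using greedy_partial[OF assms] by simp
  then show ?thesis unfolding seqval_def by (simp add: sums_iff)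
qed

lemma qg_props: assumes "1 < \<beta>" "\<beta> < 2"
  shows "binseq (quasi_greedy1 \<beta>) \<and> seqval \<beta> (quasi_greedy1 \<beta>) = 1"
proof (cases "\<exists>n. \<forall>m\<ge>n. greedy1 \<beta> m = 0")
  case False
  have "quasi_greedy1 \<beta> = greedy1 \<beta>" unfolding quasi_greedy1_def by (rule if_not_P[OF False])
  then show ?thesis using greedy_bin greedy_sum assms by simp
next
  case True
  define g where "g = greedy1 \<beta>"
  define N where "N = (LEAST n. \<forall>m\<ge>n. g m = 0)"
  define \<eta> where "\<eta> = (\<lambda>i. if i mod N = N - 1 then 0 else g (i mod N))"
  have qe: "quasi_greedy1 \<beta> = \<eta>" using True unfolding quasi_greedy1_def \<eta>_def N_def g_def by (simp add: Let_def)
  have gb: "binseq g" using greedy_bin assms g_def by simp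
  have ex: "\<exists>n. \<forall>m\<ge>n. g m = 0" using True g_def by simp
  have NI: "\<forall>m\<ge>N. g m = 0" unfolding N_def by (rule LeastI_ex[OF ex])
  have g0: "g 0 = 1" by (simp add: g_def greedy1_gx gx_0 gdigit_def)
  have N1: "N \<ge> 1"
  proof (rule ccontr)
    assume "\<not> N \<ge> 1"
    then have "N = 0" by simp
    then have "g 0 = 0" using NI by simp
    then show False using g0 by simp
  qed
  have gN: "g (N - 1) = 1"
  proof (rule ccontr)
    assume "g (N - 1) \<noteq> 1"
    then have g1: "g (N - 1) = 0" using gb unfolding binseq_def by auto
    have "\<forall>m\<ge>N - 1. g m = 0"
    proof (intro allI impI)
      fix m assume "N - 1 \<le> m"
      then have "m = N - 1 \<or> N \<le> m" using N1 by linarith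
      then show "g m = 0" using NI g1 by auto
    qed
    then have "N \<le> N - 1" unfolding N_def by (rule Least_le)
    then show False using N1 by simp
  qed
  have eb: "binseq \<eta>" using gb unfolding binseq_def \<eta>_def by auto
  have per: "(\<lambda>j. \<eta> (N + j)) = \<eta>" unfolding \<eta>_def by (rule ext) (simp only: mod_add_self1)
  have gs: "seqval \<beta> g = 1" using greedy_sum assms g_def by simp
  have gt: "tv \<beta> g N = 0" unfolding tv_def seqval_def using NI by simp
  have gsum: "(\<Sum>i<N. real (g i) / \<beta> ^ (i + 1)) = 1"
    using tv_prefix[OF assms(1) gb, of 0 N] gs gt by (simp add: tv0)
  have esum: "(\<Sum>i<N. real (\<eta> i) / \<beta> ^ (i + 1)) = 1 - 1 / \<beta> ^ N"
  proof -
    obtain N' where N': "N = Suc N'" using N1 by (cases N) auto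
    have e0: "\<eta> N' = 0" unfolding \<eta>_def N' by simp
    have e1: "(\<Sum>i<N'. real (\<eta> i) / \<beta> ^ (i + 1)) = (\<Sum>i<N'. real (g i) / \<beta> ^ (i + 1))"
      by (rule sum.cong) (auto simp: \<eta>_def N')
    have "(\<Sum>i<N. real (\<eta> i) / \<beta> ^ (i + 1)) = (\<Sum>i<N'. real (g i) / \<beta> ^ (i + 1))"
      unfolding N' using e0 e1 by simp
    moreover have "(\<Sum>i<N. real (g i) / \<beta> ^ (i + 1)) = (\<Sum>i<N'. real (g i) / \<beta> ^ (i + 1)) + 1 / \<beta> ^ N"
      using gN unfolding N' by simp
    ultimately show ?thesis using gsum by simp
  qed
  have t: "tv \<beta> \<eta> 0 = (\<Sum>i<N. real (\<eta> i) / \<beta> ^ (i + 1)) + tv \<beta> \<eta> N / \<beta> ^ N"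
    using tv_prefix[OF assms(1) eb, of 0 N] by (simp only: add_0_left)
  have a1: "tv \<beta> \<eta> 0 = seqval \<beta> \<eta>" by (rule tv0)
  have a2: "tv \<beta> \<eta> N = seqval \<beta> \<eta>" unfolding tv_def per ..
  have q: "seqval \<beta> \<eta> = (1 - 1 / \<beta> ^ N) + seqval \<beta> \<eta> / \<beta> ^ N"
    using t unfolding a1 a2 esum .
  have "seqval \<beta> \<eta> * (1 - 1 / \<beta> ^ N) = seqval \<beta> \<eta> - seqval \<beta> \<eta> / \<beta> ^ N"
    by (simp add: right_diff_distrib)
  then have "seqval \<beta> \<eta> * (1 - 1 / \<beta> ^ N) = (1 - 1 / \<beta> ^ N)" using q by linarith
  moreover have "1 - 1 / \<beta> ^ N \<noteq> 0"
  proof -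
    have gt: "1 < \<beta> ^ N" using assms N1 by (intro one_less_power) auto
    then show ?thesis by simp
  qed
  ultimately have "seqval \<beta> \<eta> = 1" by (simp; auto)
  then show ?thesis using eb qe by simp
qed



primrec lz :: "real \<Rightarrow> real \<Rightarrow> nat \<Rightarrow> real" where
  "lz \<beta> x 0 = x"
| "lz \<beta> x (Suc n) = \<beta> * lz \<beta> x n - (if \<beta> * lz \<beta> x n \<le> 1/(\<beta>-1) then 0 else 1)"

definition ldig :: "real \<Rightarrow> real \<Rightarrow> nat \<Rightarrow> nat" where
  "ldig \<beta> x n = (if \<beta> * lz \<beta> x n \<le> 1/(\<beta>-1) then 0 else 1)"

lemma cM: "1 < \<beta> \<Longrightarrow> 1 / (\<beta> * (\<beta> - 1)) = (1 / (\<beta> - 1)) / (\<beta>::real)"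
  by (simp add: field_simps)

lemma le_c: assumes "1 < (\<beta>::real)" "t \<le> 1/(\<beta>-1)" shows "t / \<beta> \<le> 1/(\<beta>*(\<beta>-1))"
proof -
  have "t / \<beta> \<le> (1/(\<beta>-1)) / \<beta>" using assms by (intro divide_right_mono) auto
  then show ?thesis by (simp add: mult.commute)
qed

lemma ge_b: assumes "1 < (\<beta>::real)" "0 \<le> t" shows "1/\<beta> \<le> (1 + t) / \<beta>"
  using assms by (intro divide_right_mono) auto

lemma lz_range: assumes "1 < \<beta>" "\<beta> < 2" "0 \<le> x" "x \<le> 1/(\<beta>-1)"
  shows "0 \<le> lz \<beta> x n \<and> lz \<beta> x n \<le> 1/(\<beta>-1)"
proof (induction n)
  case 0 then show ?case using assms by simp
next
  case (Suc n)
  define y where "y = lz \<beta> x n"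
  have y: "0 \<le> y" "y \<le> 1/(\<beta>-1)" using Suc y_def by auto
  have M1: "1 \<le> 1/(\<beta>-1)" using assms by (simp add: field_simps)
  have bM: "\<beta> * (1/(\<beta>-1)) - 1 = 1/(\<beta>-1)" using assms by (simp add: field_simps)
  have "\<beta> * y \<le> \<beta> * (1/(\<beta>-1))" using y assms by (intro mult_left_mono) auto
  moreover have "0 \<le> \<beta> * y" using y assms by simp
  ultimately show ?case using M1 bM unfolding y_def[symmetric] by (auto simp: y_def[symmetric])
qed

lemma EX: assumes "1 < \<beta>" "\<beta> < 2" "0 \<le> x" "x \<le> 1/(\<beta>-1)"
  shows "\<exists>e. binseq e \<and> seqval \<beta> e = x"
proof -
  define e where "e = ldig \<beta> x"
  have eb: "binseq e" unfolding e_def binseq_def ldig_def by auto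
  have step: "lz \<beta> x (Suc n) = \<beta> * lz \<beta> x n - real (e n)" for n
    unfolding e_def ldig_def by simp
  have part: "(\<Sum>i<n. real (e i) / \<beta> ^ (i + 1)) = x - lz \<beta> x n / \<beta> ^ n" for n
  proof (induction n)
    case 0 then show ?case by simp
  next
    case (Suc n)
    have "lz \<beta> x (Suc n) / \<beta> ^ Suc n = lz \<beta> x n / \<beta> ^ n - real (e n) / \<beta> ^ (n + 1)"
      using step[of n] assms by (simp add: field_simps)
    then show ?case using Suc by simp
  qed
  have lim: "(\<lambda>n. lz \<beta> x n / \<beta> ^ n) \<longlonglongrightarrow> 0"
    by (rule lim_bdd[OF assms(1), where B = "1/(\<beta>-1)"]) (use lz_range[OF assms] in auto)
  have "(\<lambda>n. x - lz \<beta> x n / \<beta> ^ n) \<longlonglongrightarrow> x - 0" by (intro tendsto_diff tendsto_const lim)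
  then have "(\<lambda>n. real (e n) / \<beta> ^ (n + 1)) sums x" unfolding sums_def using part by simp
  then show ?thesis using eb unfolding seqval_def by (auto simp: sums_iff)
qed

lemma seqval_prefix: "1 < \<beta> \<Longrightarrow> binseq a \<Longrightarrow>
   seqval \<beta> a = (\<Sum>i<j. real (a i) / \<beta> ^ (i + 1)) + tv \<beta> a j / \<beta> ^ j"
  using tv_prefix[of \<beta> a 0 j] by (simp add: tv0)

lemma SU: assumes "1 < \<beta>" "\<beta> < 2" "binseq b" "tv \<beta> b p \<in> {1/\<beta> .. 1/(\<beta>*(\<beta>-1))}"
  shows "b \<notin> Utilde \<beta>"
proof
  assume bU: "b \<in> Utilde \<beta>"
  define t where "t = tv \<beta> b p"
  define dn where "dn = 1 - b p"
  have t: "1/\<beta> \<le> t" "t \<le> (1/(\<beta>-1))/\<beta>" using assms(4) cM[OF assms(1)] t_def by auto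
  have bt: "1 \<le> \<beta> * t" "\<beta> * t \<le> 1/(\<beta>-1)" using t assms(1) by (auto simp: field_simps)
  have dn01: "dn \<le> 1" "dn = 1 \<or> dn = 0" unfolding dn_def by auto
  have x0: "0 \<le> \<beta> * t - dn" "\<beta> * t - dn \<le> 1/(\<beta>-1)" using bt dn01 by auto
  obtain e where e: "binseq e" "seqval \<beta> e = \<beta> * t - dn" using EX[OF assms(1,2) x0] by blast
  define b' where "b' = (\<lambda>i. if i < p then b i else if i = p then dn else e (i - Suc p))"
  have b'b: "binseq b'" using e(1) assms(3) dn01 unfolding b'_def binseq_def by auto
  have sh: "(\<lambda>j. b' (Suc p + j)) = e" unfolding b'_def by auto
  have "tv \<beta> b' p = (real (b' p) + tv \<beta> b' (Suc p)) / \<beta>" by (rule tv_step[OF assms(1) b'b])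
  also have "\<dots> = (real dn + seqval \<beta> e) / \<beta>" unfolding tv_def sh by (simp add: b'_def)
  also have "\<dots> = t" using e(2) assms(1) by (simp add: field_simps)
  finally have tp: "tv \<beta> b' p = t" .
  have "seqval \<beta> b' = (\<Sum>i<p. real (b' i) / \<beta> ^ (i + 1)) + tv \<beta> b' p / \<beta> ^ p"
    by (rule seqval_prefix[OF assms(1) b'b])
  also have "\<dots> = (\<Sum>i<p. real (b i) / \<beta> ^ (i + 1)) + tv \<beta> b p / \<beta> ^ p"
    unfolding tp t_def by (simp add: b'_def)
  also have "\<dots> = seqval \<beta> b" by (rule seqval_prefix[OF assms(1,3), symmetric])
  finally have "seqval \<beta> b' = seqval \<beta> b" .
  then have "is_expansion \<beta> b' (seqval \<beta> b)" unfolding is_expansion_def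
    using b'b seqval_sums[OF assms(1) b'b] by simp
  then have "b' = b" using bU unfolding Utilde_def by blast
  moreover have "b' p \<noteq> b p"
  proof -
    have "b p \<le> 1" using binseq_le1[OF assms(3), of p] .
    then have "1 - b p \<noteq> b p" by presburger
    then show ?thesis unfolding b'_def dn_def by simp
  qed
  ultimately show False by simp
qed

lemma NU: assumes "1 < \<beta>" "binseq a" "a \<notin> Utilde \<beta>"
  shows "\<exists>n. tv \<beta> a n \<in> {1/\<beta> .. 1/(\<beta>*(\<beta>-1))}"
proof -
  obtain b where b: "is_expansion \<beta> b (seqval \<beta> a)" "b \<noteq> a" using assms unfolding Utilde_def by blast
  have bb: "binseq b" using b unfolding is_expansion_def by simp
  have sv: "seqval \<beta> b = seqval \<beta> a" using b(1) unfolding is_expansion_def seqval_def by (simp add: sums_iff)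
  have ex: "\<exists>n. a n \<noteq> b n" using b(2) by auto
  define n where "n = (LEAST n. a n \<noteq> b n)"
  have nd: "a n \<noteq> b n" unfolding n_def using ex by (rule LeastI_ex)
  have eq: "\<forall>i<n. a i = b i" unfolding n_def using not_less_Least by blast
  have "(\<Sum>i<n. real (a i) / \<beta> ^ (i + 1)) = (\<Sum>i<n. real (b i) / \<beta> ^ (i + 1))"
    using eq by (intro sum.cong) auto
  then have "tv \<beta> a n / \<beta> ^ n = tv \<beta> b n / \<beta> ^ n"
    using seqval_prefix[OF assms(1,2), of n] seqval_prefix[OF assms(1) bb, of n] sv by linarith
  then have te: "tv \<beta> a n = tv \<beta> b n" using assms(1) by simp
  have ba: "0 \<le> tv \<beta> a (Suc n) \<and> tv \<beta> a (Suc n) \<le> 1/(\<beta>-1)" "0 \<le> tv \<beta> b (Suc n) \<and> tv \<beta> b (Suc n) \<le> 1/(\<beta>-1)"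
    using tv_bounds[OF assms(1)] assms(2) bb by auto
  have sa: "tv \<beta> a n = (real (a n) + tv \<beta> a (Suc n)) / \<beta>" "tv \<beta> b n = (real (b n) + tv \<beta> b (Suc n)) / \<beta>"
    using tv_step[OF assms(1,2), of n] tv_step[OF assms(1) bb, of n] by auto
  have h1: "a n = 0 \<or> a n = 1" using assms(2) unfolding binseq_def by blast
  have h2: "b n = 0 \<or> b n = 1" using bb unfolding binseq_def by blast
  have "a n = 0 \<and> b n = 1 \<or> a n = 1 \<and> b n = 0" using nd h1 h2 by auto
  then have "1/\<beta> \<le> tv \<beta> a n \<and> tv \<beta> a n \<le> 1/(\<beta>*(\<beta>-1))"
  proof
    assume h: "a n = 0 \<and> b n = 1"
    have "tv \<beta> a n \<le> 1/(\<beta>*(\<beta>-1))" using sa(1) h le_c[OF assms(1)] ba(1) by simp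
    moreover have "1/\<beta> \<le> tv \<beta> a n" using te sa(2) h ge_b[OF assms(1)] ba(2) by simp
    ultimately show ?thesis by simp
  next
    assume h: "a n = 1 \<and> b n = 0"
    have "tv \<beta> a n \<le> 1/(\<beta>*(\<beta>-1))" using te sa(2) h le_c[OF assms(1)] ba(2) by simp
    moreover have "1/\<beta> \<le> tv \<beta> a n" using sa(1) h ge_b[OF assms(1)] ba(1) by simp
    ultimately show ?thesis by simp
  qed
  then show ?thesis by auto
qed



definition badw :: "real \<Rightarrow> (nat \<Rightarrow> nat) \<Rightarrow> nat \<Rightarrow> nat \<Rightarrow> bool" where
  "badw \<beta> a p len \<longleftrightarrow> (\<forall>b m. binseq b \<and> (\<forall>i<len. b (m + i) = a (p + i)) \<longrightarrow>
      (\<exists>q. tv \<beta> b q \<in> {1/\<beta> .. 1/(\<beta>*(\<beta>-1))}))"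

lemma dnn: "0 < (c::real) \<Longrightarrow> 0 \<le> x / c \<Longrightarrow> 0 \<le> x"
  by (simp add: zero_le_divide_iff)

lemma dneg: "0 < (c::real) \<Longrightarrow> x / c < 0 \<Longrightarrow> x < 0"
  by (simp add: divide_less_0_iff)

lemma in_S_of0: assumes "1 < \<beta>" "binseq b" "b q = 0" "1 \<le> tv \<beta> b (Suc q)"
  shows "tv \<beta> b q \<in> {1/\<beta> .. 1/(\<beta>*(\<beta>-1))}"
proof -
  have e: "tv \<beta> b q = tv \<beta> b (Suc q) / \<beta>" using tv_step[OF assms(1,2), of q] assms(3) by simp
  have "tv \<beta> b (Suc q) \<le> 1/(\<beta>-1)" using tv_bounds[OF assms(1,2)] by blast
  then have "tv \<beta> b q \<le> 1/(\<beta>*(\<beta>-1))" using e le_c[OF assms(1)] by simp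
  moreover have "1/\<beta> \<le> tv \<beta> b q" using e assms(1,4) by (simp add: divide_right_mono)
  ultimately show ?thesis by simp
qed

lemma agree_diff: assumes "1 < \<beta>" "binseq b" "binseq \<eta>" "tv \<beta> \<eta> 0 = 1" "\<forall>i<j. b (q + i) = \<eta> i"
  shows "tv \<beta> b q - 1 = (tv \<beta> b (q + j) - tv \<beta> \<eta> j) / \<beta> ^ j"
proof -
  have s: "(\<Sum>i<j. real (b (q + i)) / \<beta> ^ (i + 1)) = (\<Sum>i<j. real (\<eta> (0 + i)) / \<beta> ^ (i + 1))"
    using assms(5) by (intro sum.cong) auto
  show ?thesis using tv_prefix[OF assms(1,2), of q j] tv_prefix[OF assms(1,3), of 0 j] assms(4) s
    by (simp add: diff_divide_distrib)
qed

lemma core0: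
  fixes \<beta> :: real and \<eta> a :: "nat \<Rightarrow> nat" and k n J :: nat
  assumes b1: "1 < \<beta>" "\<beta> < 2" and eb: "binseq \<eta>" and e1: "tv \<beta> \<eta> 0 = 1"
    and kc: "tv \<beta> \<eta> k = 1/(\<beta>*(\<beta>-1))"
    and gap: "\<forall>j<k. (\<eta> j = 0 \<and> tv \<beta> \<eta> j < 1/\<beta>) \<or> (\<eta> j = 1 \<and> tv \<beta> \<eta> j > 1/(\<beta>*(\<beta>-1)))"
    and J: "1 \<le> (\<Sum>i<J. 1/\<beta>^(i+1))"
    and ab: "binseq a" and an: "a n = 0" and tS: "tv \<beta> a n \<in> {1/\<beta> .. 1/(\<beta>*(\<beta>-1))}"
  shows "\<exists>p len. len \<le> max (k+2) (J+1) \<and> badw \<beta> a p len"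
proof -
  have t1: "1 \<le> tv \<beta> a (Suc n)"
  proof -
    have "tv \<beta> a n = tv \<beta> a (Suc n) / \<beta>" using tv_step[OF b1(1) ab, of n] an by simp
    moreover have "1/\<beta> \<le> tv \<beta> a n" using tS by simp
    ultimately have "1/\<beta> \<le> tv \<beta> a (Suc n) / \<beta>" by simp
    then show ?thesis using b1(1) by (simp add: divide_le_cancel)
  qed
  have step0: "\<And>b q. binseq b \<Longrightarrow> b q = 0 \<Longrightarrow> tv \<beta> b q \<le> 1/(\<beta>*(\<beta>-1))"
  proof -
    fix b q assume h: "binseq b" "b q = (0::nat)"
    have "tv \<beta> b q = tv \<beta> b (Suc q) / \<beta>" using tv_step[OF b1(1) h(1), of q] h(2) by simp
    moreover have "tv \<beta> b (Suc q) \<le> 1/(\<beta>-1)" using tv_bounds[OF b1(1) h(1)] by blast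
    ultimately show "tv \<beta> b q \<le> 1/(\<beta>*(\<beta>-1))" using le_c[OF b1(1)] by simp
  qed
  have step1: "\<And>b q. binseq b \<Longrightarrow> b q = 1 \<Longrightarrow> 1/\<beta> \<le> tv \<beta> b q"
  proof -
    fix b q assume h: "binseq b" "b q = (1::nat)"
    have "tv \<beta> b q = (1 + tv \<beta> b (Suc q)) / \<beta>" using tv_step[OF b1(1) h(1), of q] h(2) by simp
    moreover have "0 \<le> tv \<beta> b (Suc q)" using tv_bounds[OF b1(1) h(1)] by blast
    ultimately show "1/\<beta> \<le> tv \<beta> b q" using b1(1) by (simp add: divide_right_mono)
  qed
  have bin: "\<And>b i. binseq b \<Longrightarrow> b i = 0 \<or> b i = 1" unfolding binseq_def by auto
  show ?thesis
  proof (cases "\<exists>j<k. a (Suc n + j) \<noteq> \<eta> j")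
    case True
    define j where "j = (LEAST j. j < k \<and> a (Suc n + j) \<noteq> \<eta> j)"
    have jk0: "j < k \<and> a (Suc n + j) \<noteq> \<eta> j" unfolding j_def using True by (rule LeastI_ex)
    then have jk: "j < k" "a (Suc n + j) \<noteq> \<eta> j" by auto
    have ag: "\<forall>i<j. a (Suc n + i) = \<eta> i"
    proof (intro allI impI)
      fix i assume ij: "i < j"
      then have "\<not> (i < k \<and> a (Suc n + i) \<noteq> \<eta> i)" unfolding j_def by (rule not_less_Least)
      then show "a (Suc n + i) = \<eta> i" using ij jk by auto
    qed
    have ge: "tv \<beta> \<eta> j \<le> tv \<beta> a (Suc n + j)"
    proof -
      have "tv \<beta> a (Suc n) - 1 = (tv \<beta> a (Suc n + j) - tv \<beta> \<eta> j) / \<beta> ^ j"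
        by (rule agree_diff[OF b1(1) ab eb e1 ag])
      then have "0 \<le> (tv \<beta> a (Suc n + j) - tv \<beta> \<eta> j) / \<beta> ^ j" using t1 by linarith
      then have "0 \<le> tv \<beta> a (Suc n + j) - tv \<beta> \<eta> j" by (rule dnn[rotated]) (use b1(1) in simp)
      then show ?thesis by simp
    qed
    have "(\<eta> j = 0 \<and> a (Suc n + j) = 1) \<or> (\<eta> j = 1 \<and> a (Suc n + j) = 0)"
      using jk(2) bin[OF eb, of j] bin[OF ab, of "Suc n + j"] by auto
    then show ?thesis
    proof
      assume h: "\<eta> j = 0 \<and> a (Suc n + j) = 1"
      have lt: "tv \<beta> \<eta> j < 1/\<beta>" using gap jk(1) h by auto
      have "badw \<beta> a n (j + 2)" unfolding badw_def
      proof (intro allI impI)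
        fix b m assume bm: "binseq b \<and> (\<forall>i<j + 2. b (m + i) = a (n + i))"
        have b0: "b m = 0" using bm[THEN conjunct2, rule_format, of 0] an by simp
        have bag: "\<forall>i<j. b (Suc m + i) = \<eta> i"
        proof (intro allI impI)
          fix i assume "i < j"
          then have "b (m + Suc i) = a (n + Suc i)" using bm[THEN conjunct2, rule_format, of "Suc i"] by simp
          then show "b (Suc m + i) = \<eta> i" using ag \<open>i < j\<close> by simp
        qed
        have bj: "b (Suc m + j) = 1" using bm[THEN conjunct2, rule_format, of "Suc j"] h by simp
        have "1/\<beta> \<le> tv \<beta> b (Suc m + j)" using step1 bm bj by blast
        then have "0 < (tv \<beta> b (Suc m + j) - tv \<beta> \<eta> j) / \<beta> ^ j" using lt b1(1) by simp
        then have "1 \<le> tv \<beta> b (Suc m)" using agree_diff[OF b1(1) _ eb e1 bag] bm by simp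
        then show "\<exists>q. tv \<beta> b q \<in> {1/\<beta> .. 1/(\<beta>*(\<beta>-1))}" using in_S_of0[of \<beta> b m] b1(1) b0 bm by blast
      qed
      moreover have "j + 2 \<le> max (k+2) (J+1)" using jk by simp
      ultimately show ?thesis by blast
    next
      assume h: "\<eta> j = 1 \<and> a (Suc n + j) = 0"
      have "tv \<beta> \<eta> j > 1/(\<beta>*(\<beta>-1))" using gap jk(1) h by auto
      moreover have "tv \<beta> a (Suc n + j) \<le> 1/(\<beta>*(\<beta>-1))" using step0[OF ab] h by blast
      ultimately show ?thesis using ge by simp
    qed
  next
    case False
    then have ag: "\<forall>i<k. a (Suc n + i) = \<eta> i" by simp
    have ge: "1/(\<beta>*(\<beta>-1)) \<le> tv \<beta> a (Suc n + k)"
    proof -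
      have "tv \<beta> a (Suc n) - 1 = (tv \<beta> a (Suc n + k) - tv \<beta> \<eta> k) / \<beta> ^ k"
        by (rule agree_diff[OF b1(1) ab eb e1 ag])
      then have "0 \<le> (tv \<beta> a (Suc n + k) - tv \<beta> \<eta> k) / \<beta> ^ k" using t1 by linarith
      then have "0 \<le> tv \<beta> a (Suc n + k) - tv \<beta> \<eta> k" by (rule dnn[rotated]) (use b1(1) in simp)
      then show ?thesis using kc by simp
    qed
    consider "a (Suc n + k) = 0" | "a (Suc n + k) = 1" using bin[OF ab, of "Suc n + k"] by (elim disjE) auto
    then show ?thesis
    proof cases
      case 1
      define p where "p = Suc n + k"
      have "tv \<beta> a p = tv \<beta> a (Suc p) / \<beta>" using tv_step[OF b1(1) ab, of p] 1 p_def by simp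
      moreover have "tv \<beta> a p = 1/(\<beta>*(\<beta>-1))" using ge step0[OF ab 1] unfolding p_def by linarith
      ultimately have eqp: "tv \<beta> a (Suc p) / \<beta> = 1/(\<beta>*(\<beta>-1))" by simp
      have "tv \<beta> a (Suc p) = \<beta> * (tv \<beta> a (Suc p) / \<beta>)" using b1(1) by simp
      also have "\<dots> = \<beta> * (1/(\<beta>*(\<beta>-1)))" using eqp by simp
      also have "\<dots> = 1/(\<beta>-1)" using b1(1) by simp
      finally have "tv \<beta> a (Suc p) = 1/(\<beta>-1)" .
      then have ones: "\<And>i. a (Suc p + i) = 1" using tv_M[OF b1(1) ab] by blast
      have "badw \<beta> a p (J + 1)" unfolding badw_def
      proof (intro allI impI)
        fix b m assume bm: "binseq b \<and> (\<forall>i<J + 1. b (m + i) = a (p + i))"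
        have b0: "b m = 0" using bm[THEN conjunct2, rule_format, of 0] 1 p_def by simp
        have b1s: "\<forall>i<J. b (Suc m + i) = 1"
        proof (intro allI impI)
          fix i assume "i < J"
          then have "b (m + Suc i) = a (p + Suc i)" using bm[THEN conjunct2, rule_format, of "Suc i"] by simp
          then show "b (Suc m + i) = 1" using ones[of i] by simp
        qed
        have "tv \<beta> b (Suc m) = (\<Sum>i<J. real (b (Suc m + i)) / \<beta> ^ (i + 1)) + tv \<beta> b (Suc m + J) / \<beta> ^ J"
          using tv_prefix[OF b1(1), of b "Suc m" J] bm by blast
        also have "(\<Sum>i<J. real (b (Suc m + i)) / \<beta> ^ (i + 1)) = (\<Sum>i<J. 1 / \<beta> ^ (i + 1))"
          using b1s by (intro sum.cong) auto
        finally have eqn: "tv \<beta> b (Suc m) = (\<Sum>i<J. 1 / \<beta> ^ (i + 1)) + tv \<beta> b (Suc m + J) / \<beta> ^ J" .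
        have "0 \<le> tv \<beta> b (Suc m + J) / \<beta> ^ J" using tv_bounds[OF b1(1), of b "Suc m + J"] bm b1(1) by simp
        then have "1 \<le> tv \<beta> b (Suc m)" using eqn J by linarith
        then show "\<exists>q. tv \<beta> b q \<in> {1/\<beta> .. 1/(\<beta>*(\<beta>-1))}" using in_S_of0[of \<beta> b m] b1(1) b0 bm by blast
      qed
      moreover have "J + 1 \<le> max (k+2) (J+1)" by simp
      ultimately show ?thesis by blast
    next
      case 2
      have "badw \<beta> a n (k + 2)" unfolding badw_def
      proof (intro allI impI)
        fix b m assume bm: "binseq b \<and> (\<forall>i<k + 2. b (m + i) = a (n + i))"
        have b0: "b m = 0" using bm[THEN conjunct2, rule_format, of 0] an by simp
        have bag: "\<forall>i<k. b (Suc m + i) = \<eta> i"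
        proof (intro allI impI)
          fix i assume "i < k"
          then have "b (m + Suc i) = a (n + Suc i)" using bm[THEN conjunct2, rule_format, of "Suc i"] by simp
          then show "b (Suc m + i) = \<eta> i" using ag \<open>i < k\<close> by simp
        qed
        have bk: "b (Suc m + k) = 1" using bm[THEN conjunct2, rule_format, of "Suc k"] 2 by simp
        show "\<exists>q. tv \<beta> b q \<in> {1/\<beta> .. 1/(\<beta>*(\<beta>-1))}"
        proof (cases "1 \<le> tv \<beta> b (Suc m)")
          case True then show ?thesis using in_S_of0[of \<beta> b m] b1(1) b0 bm by blast
        next
          case False
          have "tv \<beta> b (Suc m) - 1 = (tv \<beta> b (Suc m + k) - tv \<beta> \<eta> k) / \<beta> ^ k"
            using agree_diff[OF b1(1) _ eb e1 bag] bm by blast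
          then have "(tv \<beta> b (Suc m + k) - tv \<beta> \<eta> k) / \<beta> ^ k < 0" using False by linarith
          then have "tv \<beta> b (Suc m + k) - tv \<beta> \<eta> k < 0" by (rule dneg[rotated]) (use b1(1) in simp)
          then have "tv \<beta> b (Suc m + k) < 1/(\<beta>*(\<beta>-1))" using kc by simp
          moreover have "1/\<beta> \<le> tv \<beta> b (Suc m + k)" using step1 bm bk by blast
          ultimately show ?thesis by auto
        qed
      qed
      moreover have "k + 2 \<le> max (k+2) (J+1)" by simp
      ultimately show ?thesis by blast
    qed
  qed
qed



lemma S_sym: assumes "1 < (\<beta>::real)" "t \<in> {1/\<beta> .. 1/(\<beta>*(\<beta>-1))}"
  shows "1/(\<beta>-1) - t \<in> {1/\<beta> .. 1/(\<beta>*(\<beta>-1))}"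
proof -
  have a0: "\<beta> - 1 \<noteq> 0" "\<beta> \<noteq> 0" using assms(1) by auto
  have "1/(\<beta>-1) = \<beta>/(\<beta>*(\<beta>-1))" using a0 by simp
  then have "1/(\<beta>-1) - 1/(\<beta>*(\<beta>-1)) = (\<beta> - 1)/(\<beta>*(\<beta>-1))" by (simp add: diff_divide_distrib)
  also have "\<dots> = 1/\<beta>" using a0 by simp
  finally have e1: "1/(\<beta>-1) - 1/(\<beta>*(\<beta>-1)) = 1/\<beta>" .
  have "1/\<beta> = (\<beta>-1)/(\<beta>*(\<beta>-1))" using a0 by simp
  then have "1/(\<beta>-1) - 1/\<beta> = (\<beta> - (\<beta>-1))/(\<beta>*(\<beta>-1))"
    using \<open>1/(\<beta>-1) = \<beta>/(\<beta>*(\<beta>-1))\<close> by (simp add: diff_divide_distrib)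
  also have "\<dots> = 1/(\<beta>*(\<beta>-1))" by simp
  finally have e2: "1/(\<beta>-1) - 1/\<beta> = 1/(\<beta>*(\<beta>-1))" .
  show ?thesis using assms(2) e1 e2 by auto
qed

lemma core:
  fixes \<beta> :: real and \<eta> a :: "nat \<Rightarrow> nat" and k n J :: nat
  assumes b1: "1 < \<beta>" "\<beta> < 2" and eb: "binseq \<eta>" and e1: "tv \<beta> \<eta> 0 = 1"
    and kc: "tv \<beta> \<eta> k = 1/(\<beta>*(\<beta>-1))"
    and gap: "\<forall>j<k. (\<eta> j = 0 \<and> tv \<beta> \<eta> j < 1/\<beta>) \<or> (\<eta> j = 1 \<and> tv \<beta> \<eta> j > 1/(\<beta>*(\<beta>-1)))"
    and J: "1 \<le> (\<Sum>i<J. 1/\<beta>^(i+1))"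
    and ab: "binseq a" and tS: "tv \<beta> a n \<in> {1/\<beta> .. 1/(\<beta>*(\<beta>-1))}"
  shows "\<exists>p len. len \<le> max (k+2) (J+1) \<and> badw \<beta> a p len"
proof (cases "a n = 0")
  case True show ?thesis using core0[OF b1 eb e1 kc gap J ab True tS] by blast
next
  case False
  have "a n \<in> {0,1}" using ab unfolding binseq_def by simp
  then have an: "a n = 1" using False by simp
  have cb: "binseq (cmp a)" using binseq_cmp[OF ab] .
  have c0: "cmp a n = 0" unfolding cmp_def using an by simp
  have cS: "tv \<beta> (cmp a) n \<in> {1/\<beta> .. 1/(\<beta>*(\<beta>-1))}"
    using tv_cmp[OF b1(1) ab, of n] S_sym[OF b1(1) tS] by simp
  obtain p len where pl: "len \<le> max (k+2) (J+1)" "badw \<beta> (cmp a) p len"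
    using core0[OF b1 eb e1 kc gap J cb c0 cS] by blast
  have "badw \<beta> a p len" unfolding badw_def
  proof (intro allI impI)
    fix b m assume bm: "binseq b \<and> (\<forall>i<len. b (m + i) = a (p + i))"
    have "binseq (cmp b) \<and> (\<forall>i<len. cmp b (m + i) = cmp a (p + i))"
      using bm binseq_cmp unfolding cmp_def by auto
    then obtain q where q: "tv \<beta> (cmp b) q \<in> {1/\<beta> .. 1/(\<beta>*(\<beta>-1))}"
      using pl(2) unfolding badw_def by blast
    have "tv \<beta> b q = 1/(\<beta>-1) - tv \<beta> (cmp b) q" using tv_cmp[OF b1(1), of b q] bm by simp
    then have "tv \<beta> b q \<in> {1/\<beta> .. 1/(\<beta>*(\<beta>-1))}" using S_sym[OF b1(1) q] by simp
    then show "\<exists>q. tv \<beta> b q \<in> {1/\<beta> .. 1/(\<beta>*(\<beta>-1))}" by blast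
  qed
  then show ?thesis using pl(1) by blast
qed

lemma occ: assumes "occurs_at (map a [p..<p+len]) b m" "i < len" shows "b (m + i) = a (p + i)"
proof -
  have "map b [m..<m+len] = map a [p..<p+len]" using assms(1) unfolding occurs_at_def by simp
  then have "map b [m..<m+len] ! i = map a [p..<p+len] ! i" by simp
  then show ?thesis using assms(2) by simp
qed

lemma phi_facts: assumes "(1 + sqrt 5) / 2 < (\<beta>::real)"
  shows "1 < \<beta>" "1 < \<beta> * (\<beta> - 1)"
proof -
  obtain s where sd: "s = sqrt 5" by blast
  have s1: "1 < s" using sd by simp
  have s0: "0 \<le> s" using sd by simp
  have ss: "s * s = 5" using sd by simp
  have a: "(1 + s) / 2 < \<beta>" using assms sd by simp
  then have "1 + s < 2 * \<beta>" by (simp add: field_simps)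
  then have lt: "s < 2 * \<beta> - 1" by linarith
  show "1 < \<beta>" using lt s1 by linarith
  have "s * s < (2 * \<beta> - 1) * (2 * \<beta> - 1)"
    using lt s0 by (intro mult_strict_mono) auto
  then have "5 < (2 * \<beta> - 1) * (2 * \<beta> - 1)" using ss by simp
  then show "1 < \<beta> * (\<beta> - 1)" by (simp add: algebra_simps)
qed

theorem lemma3p8:
  fixes \<beta> :: real
  assumes "(1 + sqrt 5) / 2 < \<beta>" and "\<beta> < 2"
    and "\<exists>k\<ge>1. Qorb \<beta> k = 1 / (\<beta> * (\<beta> - 1)) \<and>
           (\<forall>i. 1 \<le> i \<and> i < k \<longrightarrow> Qorb \<beta> i \<notin> {1 / \<beta> .. 1 / (\<beta> * (\<beta> - 1))})"
  shows "is_SFT (Utilde \<beta>)"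
proof -
  have b1: "1 < \<beta>" and bb: "1 < \<beta> * (\<beta> - 1)" using phi_facts[OF assms(1)] by auto
  note b2 = assms(2)
  define \<eta> where "\<eta> = quasi_greedy1 \<beta>"
  have eb: "binseq \<eta>" and es: "seqval \<beta> \<eta> = 1" using qg_props[OF b1 b2] \<eta>_def by auto
  have e1: "tv \<beta> \<eta> 0 = 1" using es by (simp add: tv0)
  have Qt: "\<And>i. Qorb \<beta> i = tv \<beta> \<eta> i" by (simp add: Qorb_def tv_def seqval_def \<eta>_def)
  obtain k where k: "k \<ge> 1" "tv \<beta> \<eta> k = 1 / (\<beta> * (\<beta> - 1))"
    "\<forall>i. 1 \<le> i \<and> i < k \<longrightarrow> tv \<beta> \<eta> i \<notin> {1 / \<beta> .. 1 / (\<beta> * (\<beta> - 1))}"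
    using assms(3) unfolding Qt by blast
  have c1: "1 / (\<beta> * (\<beta> - 1)) < 1" using bb by simp
  have gap: "\<forall>j<k. (\<eta> j = 0 \<and> tv \<beta> \<eta> j < 1/\<beta>) \<or> (\<eta> j = 1 \<and> tv \<beta> \<eta> j > 1/(\<beta>*(\<beta>-1)))"
  proof (intro allI impI)
    fix j assume jk: "j < k"
    have nS: "tv \<beta> \<eta> j \<notin> {1 / \<beta> .. 1 / (\<beta> * (\<beta> - 1))}"
    proof (cases "j = 0")
      case True then show ?thesis using e1 c1 by auto
    next
      case False then show ?thesis using k(3) jk by auto
    qed
    have st: "tv \<beta> \<eta> j = (real (\<eta> j) + tv \<beta> \<eta> (Suc j)) / \<beta>" by (rule tv_step[OF b1 eb])
    have bd: "0 \<le> tv \<beta> \<eta> (Suc j) \<and> tv \<beta> \<eta> (Suc j) \<le> 1/(\<beta>-1)" using tv_bounds[OF b1 eb] by blast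
    have "\<eta> j = 0 \<or> \<eta> j = 1" using eb unfolding binseq_def by blast
    then show "(\<eta> j = 0 \<and> tv \<beta> \<eta> j < 1/\<beta>) \<or> (\<eta> j = 1 \<and> tv \<beta> \<eta> j > 1/(\<beta>*(\<beta>-1)))"
    proof
      assume h: "\<eta> j = 0"
      have "tv \<beta> \<eta> j \<le> 1/(\<beta>*(\<beta>-1))" using st h le_c[OF b1] bd by simp
      then show ?thesis using nS h by auto
    next
      assume h: "\<eta> j = 1"
      have "1/\<beta> \<le> tv \<beta> \<eta> j" using st h ge_b[OF b1] bd by simp
      then show ?thesis using nS h by auto
    qed
  qed
  obtain J where J: "1 \<le> (\<Sum>i<J. 1/\<beta>^(i+1))"
  proof -
    have "(\<lambda>n. \<Sum>i<n. 1/\<beta>^(i+1)) \<longlonglongrightarrow> 1/(\<beta>-1)" using geom_sums[OF b1] unfolding sums_def .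
    moreover have "1 < 1/(\<beta>-1)" using b1 b2 by (simp add: field_simps)
    ultimately have "\<forall>\<^sub>F n in sequentially. 1 < (\<Sum>i<n. 1/\<beta>^(i+1))" by (rule order_tendstoD(1))
    then obtain N where "\<forall>n\<ge>N. 1 < (\<Sum>i<n. 1/\<beta>^(i+1))" unfolding eventually_sequentially by blast
    then have "1 \<le> (\<Sum>i<N. 1/\<beta>^(i+1))" by (simp add: less_imp_le)
    then show ?thesis using that by blast
  qed
  define L where "L = max (k+2) (J+1)"
  define F where "F = {u. set u \<subseteq> {0,1} \<and> length u \<le> L \<and> (\<forall>b\<in>Utilde \<beta>. \<forall>m. \<not> occurs_at u b m)}"
  have fin: "finite F"
  proof (rule finite_subset)
    show "F \<subseteq> {xs. set xs \<subseteq> {0,1} \<and> length xs \<le> L}" unfolding F_def by auto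
    show "finite {xs. set xs \<subseteq> {0::nat,1} \<and> length xs \<le> L}" by (rule finite_lists_length_le) simp
  qed
  have eq: "Utilde \<beta> = {a. binseq a \<and> (\<forall>w\<in>F. \<forall>n. \<not> occurs_at w a n)}"
  proof
    show "Utilde \<beta> \<subseteq> {a. binseq a \<and> (\<forall>w\<in>F. \<forall>n. \<not> occurs_at w a n)}"
      unfolding F_def Utilde_def by auto
  next
    show "{a. binseq a \<and> (\<forall>w\<in>F. \<forall>n. \<not> occurs_at w a n)} \<subseteq> Utilde \<beta>"
    proof
      fix a assume "a \<in> {a. binseq a \<and> (\<forall>w\<in>F. \<forall>n. \<not> occurs_at w a n)}"
      then have ab: "binseq a" and av: "\<forall>w\<in>F. \<forall>n. \<not> occurs_at w a n" by auto
      show "a \<in> Utilde \<beta>"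
      proof (rule ccontr)
        assume "a \<notin> Utilde \<beta>"
        then obtain n where n: "tv \<beta> a n \<in> {1/\<beta> .. 1/(\<beta>*(\<beta>-1))}" using NU[OF b1 ab] by blast
        obtain p len where pl: "len \<le> L" "badw \<beta> a p len"
          using core[OF b1 b2 eb e1 k(2) gap J ab n] unfolding L_def by blast
        define w where "w = map a [p..<p+len]"
        have "w \<in> F" unfolding F_def
        proof (intro CollectI conjI ballI allI)
          show "set w \<subseteq> {0,1}"
          proof
            fix x assume "x \<in> set w"
            then obtain i where "x = a i" unfolding w_def by auto
            then show "x \<in> {0,1}" using ab unfolding binseq_def by simp
          qed
          show "length w \<le> L" unfolding w_def using pl(1) by simp
          fix b m assume bU: "b \<in> Utilde \<beta>"
          show "\<not> occurs_at w b m"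
          proof
            assume o: "occurs_at w b m"
            have bb': "binseq b" using bU unfolding Utilde_def by simp
            have "\<forall>i<len. b (m + i) = a (p + i)" using occ o unfolding w_def by blast
            then obtain q where "tv \<beta> b q \<in> {1/\<beta> .. 1/(\<beta>*(\<beta>-1))}"
              using pl(2) bb' unfolding badw_def by blast
            then have "b \<notin> Utilde \<beta>" using SU[OF b1 b2 bb'] by blast
            then show False using bU by simp
          qed
        qed
        moreover have "occurs_at w a p" unfolding occurs_at_def w_def by simp
        ultimately show False using av by blast
      qed
    qed
  qed
  show ?thesis unfolding is_SFT_def using fin eq by blast
qed


end
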